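(* Let $\mathfrak s_{nc}$ be a real semisimple Lie algebra without compact ideals, with Cartan involution $\Theta$, maximal abelian subspace $\mathfrak a$ of the $(-1)$-eigenspace of $\Theta$, restricted root space decomposition $\mathfrak s_{nc}=\mathfrak s_-\oplus\mathfrak a\oplus\mathfrak m\oplus\mathfrak s_+$ (where $\mathfrak m$ is the centralizer of $\mathfrak a$ in the fixed-point set of $\Theta$, $\mathfrak s_+$ the sum of positive root spaces and $\mathfrak s_-$ the sum of negative root spaces, for some choice of positivity). Let $\pi:\mathfrak s_{nc}\to\mathfrak{gl}(V)$ be a finite-dimensional real linear representation. Then the linear span of $\{\pi(X)v : X\in\mathfrak s_{nc},\ v\in V\}$ equals the linear span of $\{\pi(X)v : X\in\mathfrak a\oplus\mathfrak m\oplus\mathfrak s_+,\ v\in V\}$. *)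

theory Defs
  imports "HOL-Analysis.Analysis"
begin

text \<open>Finite-dimensional real Lie algebras are modelled on a type of class
euclidean_space (every finite-dimensional real vector space is of this form);
the inner product plays no role except for computing traces via the basis.\<close>

definition lie_algebra :: "('g::euclidean_space \<Rightarrow> 'g \<Rightarrow> 'g) \<Rightarrow> bool" where
  "lie_algebra br \<longleftrightarrow> bilinear br \<and> (\<forall>x. br x x = 0) \<and>
     (\<forall>x y z. br x (br y z) + br y (br z x) + br z (br x y) = 0)"

definition ltrace :: "('v::euclidean_space \<Rightarrow> 'v) \<Rightarrow> real" where
  "ltrace f = (\<Sum>b\<in>Basis. inner (f b) b)"

definition killing :: "('g::euclidean_space \<Rightarrow> 'g \<Rightarrow> 'g) \<Rightarrow> 'g \<Rightarrow> 'g \<Rightarrow> real" where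
  "killing br x y = ltrace (\<lambda>z. br x (br y z))"

definition lie_ideal :: "('g::euclidean_space \<Rightarrow> 'g \<Rightarrow> 'g) \<Rightarrow> 'g set \<Rightarrow> bool" where
  "lie_ideal br I \<longleftrightarrow> subspace I \<and> (\<forall>x y. y \<in> I \<longrightarrow> br x y \<in> I)"

definition derived_set :: "('g::euclidean_space \<Rightarrow> 'g \<Rightarrow> 'g) \<Rightarrow> 'g set \<Rightarrow> 'g set" where
  "derived_set br I = span {br x y | x y. x \<in> I \<and> y \<in> I}"

definition solvable_subalg :: "('g::euclidean_space \<Rightarrow> 'g \<Rightarrow> 'g) \<Rightarrow> 'g set \<Rightarrow> bool" where
  "solvable_subalg br I \<longleftrightarrow> (\<exists>n. (derived_set br ^^ n) I = {0})"

definition semisimple :: "('g::euclidean_space \<Rightarrow> 'g \<Rightarrow> 'g) \<Rightarrow> bool" where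
  "semisimple br \<longleftrightarrow> lie_algebra br \<and>
     (\<forall>I. lie_ideal br I \<and> solvable_subalg br I \<longrightarrow> I = {0})"

definition compact_ideal :: "('g::euclidean_space \<Rightarrow> 'g \<Rightarrow> 'g) \<Rightarrow> 'g set \<Rightarrow> bool" where
  "compact_ideal br I \<longleftrightarrow> lie_ideal br I \<and> I \<noteq> {0} \<and>
     (\<forall>x\<in>I. x \<noteq> 0 \<longrightarrow> killing br x x < 0)"

definition lie_automorphism :: "('g::euclidean_space \<Rightarrow> 'g \<Rightarrow> 'g) \<Rightarrow> ('g \<Rightarrow> 'g) \<Rightarrow> bool" where
  "lie_automorphism br \<Theta> \<longleftrightarrow> linear \<Theta> \<and> bij \<Theta> \<and> (\<forall>x y. \<Theta> (br x y) = br (\<Theta> x) (\<Theta> y))"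

definition cartan_involution :: "('g::euclidean_space \<Rightarrow> 'g \<Rightarrow> 'g) \<Rightarrow> ('g \<Rightarrow> 'g) \<Rightarrow> bool" where
  "cartan_involution br \<Theta> \<longleftrightarrow> lie_automorphism br \<Theta> \<and> (\<forall>x. \<Theta> (\<Theta> x) = x) \<and>
     (\<forall>x. x \<noteq> 0 \<longrightarrow> - killing br x (\<Theta> x) > 0)"

definition abelian_subspace :: "('g::euclidean_space \<Rightarrow> 'g \<Rightarrow> 'g) \<Rightarrow> 'g set \<Rightarrow> bool" where
  "abelian_subspace br A \<longleftrightarrow> subspace A \<and> (\<forall>x\<in>A. \<forall>y\<in>A. br x y = 0)"

definition max_abelian_in_p :: "('g::euclidean_space \<Rightarrow> 'g \<Rightarrow> 'g) \<Rightarrow> ('g \<Rightarrow> 'g) \<Rightarrow> 'g set \<Rightarrow> bool" where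
  "max_abelian_in_p br \<Theta> A \<longleftrightarrow> abelian_subspace br A \<and> A \<subseteq> {x. \<Theta> x = - x} \<and>
     (\<forall>B. abelian_subspace br B \<and> B \<subseteq> {x. \<Theta> x = - x} \<and> A \<subseteq> B \<longrightarrow> B = A)"

definition m_part :: "('g::euclidean_space \<Rightarrow> 'g \<Rightarrow> 'g) \<Rightarrow> ('g \<Rightarrow> 'g) \<Rightarrow> 'g set \<Rightarrow> 'g set" where
  "m_part br \<Theta> A = {x. \<Theta> x = x \<and> (\<forall>h\<in>A. br h x = 0)}"

text \<open>Restricted root space g_\<alpha> for a linear functional \<alpha> (only its values on a matter).\<close>
definition root_space :: "('g::euclidean_space \<Rightarrow> 'g \<Rightarrow> 'g) \<Rightarrow> 'g set \<Rightarrow> ('g \<Rightarrow> real) \<Rightarrow> 'g set" where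
  "root_space br A \<alpha> = {x. \<forall>h\<in>A. br h x = \<alpha> h *\<^sub>R x}"

definition restricted_root :: "('g::euclidean_space \<Rightarrow> 'g \<Rightarrow> 'g) \<Rightarrow> 'g set \<Rightarrow> ('g \<Rightarrow> real) \<Rightarrow> bool" where
  "restricted_root br A \<alpha> \<longleftrightarrow> linear \<alpha> \<and> (\<exists>h\<in>A. \<alpha> h \<noteq> 0) \<and> root_space br A \<alpha> \<noteq> {0}"

text \<open>A choice of positivity is given by a regular element h0 of a:
positive roots are those with \<alpha>(h0) > 0.\<close>
definition regular_element :: "('g::euclidean_space \<Rightarrow> 'g \<Rightarrow> 'g) \<Rightarrow> 'g set \<Rightarrow> 'g \<Rightarrow> bool" where
  "regular_element br A h0 \<longleftrightarrow> h0 \<in> A \<and> (\<forall>\<alpha>. restricted_root br A \<alpha> \<longrightarrow> \<alpha> h0 \<noteq> 0)"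

definition s_plus :: "('g::euclidean_space \<Rightarrow> 'g \<Rightarrow> 'g) \<Rightarrow> 'g set \<Rightarrow> 'g \<Rightarrow> 'g set" where
  "s_plus br A h0 = span (\<Union>{root_space br A \<alpha> | \<alpha>. restricted_root br A \<alpha> \<and> \<alpha> h0 > 0})"

definition lie_rep :: "('g::euclidean_space \<Rightarrow> 'g \<Rightarrow> 'g) \<Rightarrow> ('g \<Rightarrow> 'v::euclidean_space \<Rightarrow> 'v) \<Rightarrow> bool" where
  "lie_rep br \<pi> \<longleftrightarrow> (\<forall>v. linear (\<lambda>x. \<pi> x v)) \<and> (\<forall>x. linear (\<pi> x)) \<and>
     (\<forall>x y v. \<pi> (br x y) v = \<pi> x (\<pi> y v) - \<pi> y (\<pi> x v))"

end

theory Submission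
  imports Defs
begin

lemma la_bil: "lie_algebra br \<Longrightarrow> bilinear br"
  by (simp add: lie_algebra_def)

lemma la_anti: assumes "lie_algebra br" shows "br y x = - br x y"
proof -
  have b: "bilinear br" using assms by (simp add: lie_algebra_def)
  have "br (x+y) (x+y) = 0" "br x x = 0" "br y y = 0" using assms by (auto simp: lie_algebra_def)
  then have "br y x + br x y = 0"
    by (simp add: bilinear_ladd[OF b] bilinear_radd[OF b])
  then show ?thesis by (simp add: eq_neg_iff_add_eq_0)
qed

lemma grp3: fixes a b c :: "'a::ab_group_add" shows "a + b + c = 0 \<Longrightarrow> b = - b' \<Longrightarrow> c = - c' \<Longrightarrow> a = c' + b'"
proof -
  assume h: "a + b + c = 0" "b = - b'" "c = - c'"
  have "a - (c' + b') = a + b + c" using h(2,3) by (simp add: algebra_simps)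
  then show ?thesis using h(1) by simp
qed

lemma la_leib: assumes "lie_algebra br"
  shows "br x (br y z) = br (br x y) z + br y (br x z)"
proof -
  have J: "br x (br y z) + br y (br z x) + br z (br x y) = 0" using assms by (simp add: lie_algebra_def)
  have a1: "br z x = - br x z" by (rule la_anti[OF assms])
  have e1: "br y (br z x) = - br y (br x z)"
    unfolding a1 by (rule bilinear_rneg[OF la_bil[OF assms]])
  have e2: "br z (br x y) = - br (br x y) z" by (rule la_anti[OF assms])
  show ?thesis by (rule grp3[OF J e1 e2])
qed

lemma lin_comp: "linear f \<Longrightarrow> linear g \<Longrightarrow> linear (\<lambda>x. f (g x))"
  using linear_compose[of g f] by (simp add: o_def)

lemma ltrace_cyclic:
  fixes f g :: "'v::euclidean_space \<Rightarrow> 'v"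
  assumes "linear f" "linear g"
  shows "ltrace (\<lambda>x. f (g x)) = ltrace (\<lambda>x. g (f x))"
proof -
  have e1: "f (g b) = (\<Sum>c\<in>Basis. (g b \<bullet> c) *\<^sub>R f c)" for b
  proof -
    have "f (g b) = f (\<Sum>c\<in>Basis. (g b \<bullet> c) *\<^sub>R c)" by (simp add: euclidean_representation)
    also have "\<dots> = (\<Sum>c\<in>Basis. (g b \<bullet> c) *\<^sub>R f c)"
      using assms(1) by (simp add: linear_sum linear_scale)
    finally show ?thesis .
  qed
  have e2: "g (f b) = (\<Sum>c\<in>Basis. (f b \<bullet> c) *\<^sub>R g c)" for b
  proof -
    have "g (f b) = g (\<Sum>c\<in>Basis. (f b \<bullet> c) *\<^sub>R c)" by (simp add: euclidean_representation)
    also have "\<dots> = (\<Sum>c\<in>Basis. (f b \<bullet> c) *\<^sub>R g c)"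
      using assms(2) by (simp add: linear_sum linear_scale)
    finally show ?thesis .
  qed
  have "ltrace (\<lambda>x. f (g x)) = (\<Sum>b\<in>Basis. \<Sum>c\<in>Basis. (g b \<bullet> c) * (f c \<bullet> b))"
    unfolding ltrace_def e1 by (simp add: inner_sum_left)
  also have "\<dots> = (\<Sum>c\<in>Basis. \<Sum>b\<in>Basis. (g b \<bullet> c) * (f c \<bullet> b))" by (rule sum.swap)
  also have "\<dots> = ltrace (\<lambda>x. g (f x))"
    unfolding ltrace_def e2 by (simp add: inner_sum_left mult.commute)
  finally show ?thesis .
qed

lemma ltrace_diff: "ltrace (\<lambda>x. f x - g x) = ltrace f - ltrace g"
  by (simp add: ltrace_def inner_diff_left sum_subtractf)
lemma ltrace_add: "ltrace (\<lambda>x. f x + g x) = ltrace f + ltrace g"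
  by (simp add: ltrace_def inner_add_left sum.distrib)
lemma ltrace_scale: "ltrace (\<lambda>x. c *\<^sub>R f x) = c * ltrace f"
  by (simp add: ltrace_def sum_distrib_left)

lemma br_lin1: "lie_algebra br \<Longrightarrow> linear (br x)"
  using la_bil bilinear_def by blast
lemma br_lin2: "lie_algebra br \<Longrightarrow> linear (\<lambda>x. br x y)"
  using la_bil bilinear_def by blast

lemma killing_sym: assumes "lie_algebra br" shows "killing br x y = killing br y x"
  unfolding killing_def using ltrace_cyclic[OF br_lin1[OF assms] br_lin1[OF assms]] .

lemma killing_inv: assumes "lie_algebra br"
  shows "killing br (br x y) z = killing br x (br y z)"
proof -
  have b: "bilinear br" using la_bil[OF assms] .
  have l1: "br (br x y) u = br x (br y u) - br y (br x u)" for u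
    using la_leib[OF assms, of x y u] by simp
  have l2: "br (br y z) w = br y (br z w) - br z (br y w)" for w
    using la_leib[OF assms, of y z w] by simp
  have c: "ltrace (\<lambda>w. br y (br x (br z w))) = ltrace (\<lambda>w. br x (br z (br y w)))"
    using ltrace_cyclic[of "br y" "\<lambda>w. br x (br z w)"] br_lin1[OF assms]
    by (simp add: lin_comp)
  have "killing br (br x y) z = ltrace (\<lambda>w. br x (br y (br z w))) - ltrace (\<lambda>w. br y (br x (br z w)))"
    unfolding killing_def l1 by (rule ltrace_diff)
  moreover have "killing br x (br y z) = ltrace (\<lambda>w. br x (br y (br z w))) - ltrace (\<lambda>w. br x (br z (br y w)))"
    unfolding killing_def l2 bilinear_rsub[OF b] by (rule ltrace_diff)
  ultimately show ?thesis using c by simp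
qed

lemma killing_bil: assumes "lie_algebra br" shows "bilinear (killing br)"
proof -
  have b: "bilinear br" using la_bil[OF assms] .
  show ?thesis unfolding bilinear_def
  proof (intro conjI allI)
    fix x show "linear (killing br x)"
    proof (rule linearI)
      fix y1 y2
      have "killing br x (y1 + y2) = ltrace (\<lambda>z. br x (br y1 z) + br x (br y2 z))"
        by (simp add: killing_def bilinear_ladd[OF b] bilinear_radd[OF b])
      then show "killing br x (y1 + y2) = killing br x y1 + killing br x y2"
        by (simp add: ltrace_add killing_def)
    next
      fix r y
      have "killing br x (r *\<^sub>R y) = ltrace (\<lambda>z. r *\<^sub>R br x (br y z))"
        by (simp add: killing_def bilinear_lmul[OF b] bilinear_rmul[OF b])
      then show "killing br x (r *\<^sub>R y) = r *\<^sub>R killing br x y"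
        by (simp add: ltrace_scale killing_def)
    qed
  next
    fix y show "linear (\<lambda>x. killing br x y)"
    proof (rule linearI)
      fix y1 y2
      have "killing br (y1 + y2) y = ltrace (\<lambda>z. br y1 (br y z) + br y2 (br y z))"
        by (simp add: killing_def bilinear_ladd[OF b])
      then show "killing br (y1 + y2) y = killing br y1 y + killing br y2 y"
        by (simp add: ltrace_add killing_def)
    next
      fix r x
      have "killing br (r *\<^sub>R x) y = ltrace (\<lambda>z. r *\<^sub>R br x (br y z))"
        by (simp add: killing_def bilinear_lmul[OF b])
      then show "killing br (r *\<^sub>R x) y = r *\<^sub>R killing br x y"
        by (simp add: ltrace_scale killing_def)
    qed
  qed
qed

lemma th_lin: "cartan_involution br \<Theta> \<Longrightarrow> linear \<Theta>"
  by (simp add: cartan_involution_def lie_automorphism_def)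
lemma th_inv: "cartan_involution br \<Theta> \<Longrightarrow> \<Theta> (\<Theta> x) = x"
  by (simp add: cartan_involution_def)
lemma th_br: "cartan_involution br \<Theta> \<Longrightarrow> \<Theta> (br x y) = br (\<Theta> x) (\<Theta> y)"
  by (simp add: cartan_involution_def lie_automorphism_def)

lemma killing_theta:
  assumes la: "lie_algebra br" and ci: "cartan_involution br \<Theta>"
  shows "killing br (\<Theta> x) (\<Theta> y) = killing br x y"
proof -
  have e: "br (\<Theta> x) (br (\<Theta> y) z) = \<Theta> (br x (br y (\<Theta> z)))" for z
    by (simp add: th_br[OF ci] th_inv[OF ci])
  have "killing br (\<Theta> x) (\<Theta> y) = ltrace (\<lambda>z. \<Theta> ((\<lambda>w. br x (br y (\<Theta> w))) z))"
    unfolding killing_def e by simp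
  also have "\<dots> = ltrace (\<lambda>z. (\<lambda>w. br x (br y (\<Theta> w))) (\<Theta> z))"
    by (rule ltrace_cyclic[OF th_lin[OF ci] lin_comp[OF br_lin1[OF la] lin_comp[OF br_lin1[OF la] th_lin[OF ci]]]])
  also have "\<dots> = killing br x y" by (simp add: killing_def th_inv[OF ci])
  finally show ?thesis .
qed

definition bq :: "('g::euclidean_space \<Rightarrow> 'g \<Rightarrow> 'g) \<Rightarrow> ('g \<Rightarrow> 'g) \<Rightarrow> 'g \<Rightarrow> 'g \<Rightarrow> real" where
  "bq br \<Theta> x y = - killing br x (\<Theta> y)"

lemma bq_sym: assumes la: "lie_algebra br" and ci: "cartan_involution br \<Theta>"
  shows "bq br \<Theta> x y = bq br \<Theta> y x"
proof -
  have "killing br y (\<Theta> x) = killing br (\<Theta> y) (\<Theta> (\<Theta> x))" using killing_theta[OF la ci] by simp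
  also have "\<dots> = killing br x (\<Theta> y)" using killing_sym[OF la] th_inv[OF ci] by simp
  finally show ?thesis by (simp add: bq_def)
qed

lemma bq_pos: "cartan_involution br \<Theta> \<Longrightarrow> x \<noteq> 0 \<Longrightarrow> bq br \<Theta> x x > 0"
  by (simp add: bq_def cartan_involution_def)

lemma bq_bil: assumes la: "lie_algebra br" and ci: "cartan_involution br \<Theta>"
  shows "bilinear (bq br \<Theta>)"
proof -
  have k: "bilinear (killing br)" by (rule killing_bil[OF la])
  have t: "linear \<Theta>" by (rule th_lin[OF ci])
  show ?thesis unfolding bilinear_def
  proof (intro conjI allI)
    fix x show "linear (bq br \<Theta> x)"
      by (rule linearI) (simp_all add: bq_def linear_add[OF t] linear_scale[OF t] bilinear_radd[OF k] bilinear_rmul[OF k])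
  next
    fix y show "linear (\<lambda>x. bq br \<Theta> x y)"
      by (rule linearI) (simp_all add: bq_def bilinear_ladd[OF k] bilinear_lmul[OF k])
  qed
qed

lemma ad_sym: assumes la: "lie_algebra br" and ci: "cartan_involution br \<Theta>" and h: "\<Theta> h = - h"
  shows "bq br \<Theta> (br h x) y = bq br \<Theta> x (br h y)"
proof -
  have b: "bilinear br" by (rule la_bil[OF la])
  have "bq br \<Theta> (br h x) y = killing br (br x h) (\<Theta> y)"
    using la_anti[OF la, of x h] bilinear_lneg[OF killing_bil[OF la]] by (simp add: bq_def)
  also have "\<dots> = killing br x (br h (\<Theta> y))" by (rule killing_inv[OF la])
  also have "\<dots> = bq br \<Theta> x (br h y)"
    using th_br[OF ci, of h y] h bilinear_lneg[OF b] bilinear_rneg[OF killing_bil[OF la]]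
    by (simp add: bq_def)
  finally show ?thesis .
qed

lemma quad0: fixes a b :: real assumes "\<forall>t. 0 \<le> 2*t*a + t^2*b" shows "a = 0"
proof (rule ccontr)
  assume a: "a \<noteq> 0"
  show False
  proof (cases "b \<le> 0")
    case True
    have "0 \<le> 2*(-a)*a + (-a)^2*b" using assms by blast
    moreover have "(-a)^2*b \<le> 0" using True by (simp add: mult_nonneg_nonpos)
    moreover have "2*(-a)*a < 0" using a by (simp add: power2_eq_square[symmetric])
    ultimately show False by linarith
  next
    case False
    have "0 \<le> 2*(-a/b)*a + (-a/b)^2*b" using assms by blast
    also have "\<dots> = - (a^2/b)" using False by (simp add: power2_eq_square field_simps)
    moreover have "a^2/b > 0" using a False by simp
    ultimately show False by linarith
  qed
qed

lemma exists_eig: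
  fixes Q :: "'a::euclidean_space \<Rightarrow> 'a \<Rightarrow> real" and T :: "'a \<Rightarrow> 'a"
  assumes Qb: "bilinear Q" and Qs: "\<And>x y. Q x y = Q y x" and Qp: "\<And>x. x \<noteq> 0 \<Longrightarrow> Q x x > 0"
    and Tl: "linear T" and U: "subspace U" and TU: "\<And>x. x \<in> U \<Longrightarrow> T x \<in> U"
    and Ts: "\<And>x y. x \<in> U \<Longrightarrow> y \<in> U \<Longrightarrow> Q (T x) y = Q x (T y)"
    and x1: "x1 \<in> U" "x1 \<noteq> 0"
  shows "\<exists>x\<in>U. x \<noteq> 0 \<and> (\<exists>l. T x = l *\<^sub>R x)"
proof -
  define S where "S = U \<inter> sphere 0 1"
  define R where "R = (\<lambda>x. Q (T x) x / Q x x)"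
  have cS: "compact S" unfolding S_def
    using closed_Int_compact[OF closed_subspace[OF U] compact_sphere] by simp
  have x1S: "(1/norm x1) *\<^sub>R x1 \<in> S" using x1 U by (simp add: S_def subspace_scale)
  have bb: "bounded_bilinear Q" using Qb bilinear_conv_bounded_bilinear by blast
  have cT: "continuous_on S T" using Tl by (simp add: linear_continuous_on linear_conv_bounded_linear)
  have c1: "continuous_on S (\<lambda>x. Q (T x) x)"
    by (rule bounded_bilinear.continuous_on[OF bb cT continuous_on_id])
  have c2: "continuous_on S (\<lambda>x. Q x x)"
    by (rule bounded_bilinear.continuous_on[OF bb continuous_on_id continuous_on_id])
  have nz: "\<forall>x\<in>S. Q x x \<noteq> 0"
  proof
    fix x assume "x \<in> S"
    then have "x \<noteq> 0" by (auto simp: S_def)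
    then show "Q x x \<noteq> 0" using Qp by force
  qed
  have cR: "continuous_on S R" unfolding R_def by (rule continuous_on_divide[OF c1 c2 nz])
  obtain x0 where x0S: "x0 \<in> S" and mx: "\<forall>y\<in>S. R y \<le> R x0"
    using continuous_attains_sup[OF cS _ cR] x1S by blast
  define M where "M = R x0"
  have x0U: "x0 \<in> U" and x0nz: "x0 \<noteq> 0" using x0S by (auto simp: S_def)
  have hom: "Q (c *\<^sub>R x) (c *\<^sub>R y) = c * c * Q x y" for c x y
    by (simp add: bilinear_lmul[OF Qb] bilinear_rmul[OF Qb])
  have hle: "Q (T y) y \<le> M * Q y y" if yU: "y \<in> U" for y
  proof (cases "y = 0")
    case True then show ?thesis by (simp add: bilinear_rzero[OF Qb])
  next
    case False
    define c where "c = 1 / norm y"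
    have c0: "c \<noteq> 0" using False by (simp add: c_def)
    have "c *\<^sub>R y \<in> S" using yU U False by (simp add: S_def subspace_scale c_def)
    then have "R (c *\<^sub>R y) \<le> M" using mx M_def by blast
    moreover have "R (c *\<^sub>R y) = R y"
      unfolding R_def using c0 by (simp add: linear_scale[OF Tl] hom)
    ultimately have "Q (T y) y / Q y y \<le> M" by (simp add: R_def)
    then show ?thesis using Qp[OF False] by (simp add: divide_le_eq)
  qed
  have eq0: "Q (T x0) x0 = M * Q x0 x0" using Qp[OF x0nz] by (simp add: M_def R_def)
  define P where "P = (\<lambda>x y. M * Q x y - Q (T x) y)"
  have P0: "P x0 y = 0" if yU: "y \<in> U" for y
  proof -
    have "0 \<le> 2*t*P x0 y + t^2 * P y y" for t
    proof -
      have "x0 + t *\<^sub>R y \<in> U" using x0U yU U by (simp add: subspace_add subspace_scale)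
      then have "0 \<le> M * Q (x0 + t *\<^sub>R y) (x0 + t *\<^sub>R y) - Q (T (x0 + t *\<^sub>R y)) (x0 + t *\<^sub>R y)"
        using hle by fastforce
      also have "\<dots> = (M * Q x0 x0 - Q (T x0) x0) + t * P x0 y + t * P y x0 + t^2 * P y y"
        by (simp add: P_def linear_add[OF Tl] linear_scale[OF Tl] bilinear_ladd[OF Qb] bilinear_radd[OF Qb]
            bilinear_lmul[OF Qb] bilinear_rmul[OF Qb] power2_eq_square algebra_simps)
      also have "P y x0 = P x0 y" using Ts[OF yU x0U] Qs by (simp add: P_def)
      finally show ?thesis using eq0 by simp
    qed
    then show ?thesis using quad0 by blast
  qed
  define y where "y = M *\<^sub>R x0 - T x0"
  have yU: "y \<in> U" using x0U TU U by (simp add: y_def subspace_diff subspace_scale)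
  have "P x0 y = Q y y" by (simp add: P_def y_def bilinear_lsub[OF Qb] bilinear_lmul[OF Qb])
  then have "Q y y = 0" using P0[OF yU] by simp
  then have "y = 0" using Qp by force
  then show ?thesis using x0U x0nz by (auto simp: y_def intro!: exI[of _ M])
qed

lemma eig_decomp:
  fixes Q :: "'a::euclidean_space \<Rightarrow> 'a \<Rightarrow> real" and T :: "'a \<Rightarrow> 'a"
  assumes Qb: "bilinear Q" and Qs: "\<And>x y. Q x y = Q y x" and Qp: "\<And>x. x \<noteq> 0 \<Longrightarrow> Q x x > 0"
    and Tl: "linear T"
  shows "subspace U \<Longrightarrow> (\<And>x. x \<in> U \<Longrightarrow> T x \<in> U) \<Longrightarrow>
    (\<And>x y. x \<in> U \<Longrightarrow> y \<in> U \<Longrightarrow> Q (T x) y = Q x (T y)) \<Longrightarrow>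
    U \<subseteq> span (\<Union>l. {x\<in>U. T x = l *\<^sub>R x})"
proof (induction "dim U" arbitrary: U rule: less_induct)
  case less
  note U = less.prems(1) and TU = less.prems(2) and Ts = less.prems(3)
  show ?case
  proof (cases "\<exists>x1\<in>U. x1 \<noteq> 0")
    case False
    then show ?thesis by (auto simp: span_zero)
  next
    case True
    then obtain x1 where "x1 \<in> U" "x1 \<noteq> 0" by blast
    from exists_eig[OF Qb Qs Qp Tl U TU Ts this] obtain x0 l where
      x0: "x0 \<in> U" "x0 \<noteq> 0" "T x0 = l *\<^sub>R x0" by blast
    define U' where "U' = {y\<in>U. Q x0 y = 0}"
    have U'U: "U' \<subseteq> U" by (auto simp: U'_def)
    have sU': "subspace U'" unfolding subspace_def U'_def
      using U by (auto simp: subspace_def bilinear_rzero[OF Qb] bilinear_radd[OF Qb] bilinear_rmul[OF Qb])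
    have TU': "T y \<in> U'" if "y \<in> U'" for y
    proof -
      have "Q x0 (T y) = Q (T x0) y" using Ts[of x0 y] x0 that U'U by auto
      also have "\<dots> = 0" using x0 that by (simp add: U'_def bilinear_lmul[OF Qb])
      finally show ?thesis using that TU by (auto simp: U'_def)
    qed
    have x0n: "x0 \<notin> U'" using Qp[OF x0(2)] by (simp add: U'_def)
    have "span U' \<subset> span U" using U'U x0 x0n span_eq_iff[of U'] span_eq_iff[of U] sU' U by blast
    then have "dim U' < dim U" by (rule dim_psubset)
    then have IH: "U' \<subseteq> span (\<Union>l. {x\<in>U'. T x = l *\<^sub>R x})"
      using less.hyps[OF _ sU' TU'] Ts U'U by blast
    also have "\<dots> \<subseteq> span (\<Union>l. {x\<in>U. T x = l *\<^sub>R x})"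
      by (rule span_mono) (use U'U in blast)
    finally have IH': "U' \<subseteq> span (\<Union>l. {x\<in>U. T x = l *\<^sub>R x})" .
    have x0s: "x0 \<in> span (\<Union>l. {x\<in>U. T x = l *\<^sub>R x})"
      using x0 by (intro span_base) blast
    show ?thesis
    proof
      fix y assume yU: "y \<in> U"
      define a where "a = Q x0 y / Q x0 x0"
      have "y - a *\<^sub>R x0 \<in> U'"
        using yU x0 U Qp[OF x0(2)] by (simp add: U'_def a_def subspace_diff subspace_scale bilinear_rsub[OF Qb] bilinear_rmul[OF Qb])
      then have "y - a *\<^sub>R x0 \<in> span (\<Union>l. {x\<in>U. T x = l *\<^sub>R x})" using IH' by blast
      moreover have "a *\<^sub>R x0 \<in> span (\<Union>l. {x\<in>U. T x = l *\<^sub>R x})" using x0s by (rule span_mul)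
      ultimately have "(y - a *\<^sub>R x0) + a *\<^sub>R x0 \<in> span (\<Union>l. {x\<in>U. T x = l *\<^sub>R x})" by (rule span_add)
      then show "y \<in> span (\<Union>l. {x\<in>U. T x = l *\<^sub>R x})" by simp
    qed
  qed
qed

lemma ad_comm: assumes la: "lie_algebra br" and "br h h' = 0"
  shows "br h (br h' x) = br h' (br h x)"
  using la_leib[OF la, of h h' x] assms(2) bilinear_lzero[OF la_bil[OF la]] by simp

lemma joint_decomp:
  assumes la: "lie_algebra br" and ci: "cartan_involution br \<Theta>"
    and Ap: "\<And>h. h \<in> A \<Longrightarrow> \<Theta> h = - h" and Aab: "\<And>h h'. h \<in> A \<Longrightarrow> h' \<in> A \<Longrightarrow> br h h' = 0"
  shows "subspace U \<Longrightarrow> (\<And>h x. h \<in> A \<Longrightarrow> x \<in> U \<Longrightarrow> br h x \<in> U) \<Longrightarrow>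
    U \<subseteq> span (\<Union>{U \<inter> root_space br A \<alpha> | \<alpha>. linear \<alpha>})"
proof (induction "dim U" arbitrary: U rule: less_induct)
  case less
  note U = less.prems(1) and AU = less.prems(2)
  have b: "bilinear br" by (rule la_bil[OF la])
  have Qb: "bilinear (bq br \<Theta>)" by (rule bq_bil[OF la ci])
  show ?case
  proof (cases "\<forall>h\<in>A. \<exists>c. \<forall>x\<in>U. br h x = c *\<^sub>R x")
    case True
    show ?thesis
    proof
      fix x assume xU: "x \<in> U"
      show "x \<in> span (\<Union>{U \<inter> root_space br A \<alpha> | \<alpha>. linear \<alpha>})"
      proof (cases "x = 0")
        case True then show ?thesis by (simp add: span_zero)
      next
        case False
        define \<alpha> where "\<alpha> = (\<lambda>y. bq br \<Theta> (br y x) x / bq br \<Theta> x x)"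
        have lin: "linear \<alpha>"
          by (rule linearI) (simp_all add: \<alpha>_def bilinear_ladd[OF b] bilinear_lmul[OF b]
              bilinear_ladd[OF Qb] bilinear_lmul[OF Qb] add_divide_distrib)
        have "x \<in> root_space br A \<alpha>"
          unfolding root_space_def
        proof (intro CollectI ballI)
          fix h assume hA: "h \<in> A"
          then obtain c where c: "\<forall>x\<in>U. br h x = c *\<^sub>R x" using True by blast
          then have "br h x = c *\<^sub>R x" using xU by blast
          moreover have "\<alpha> h = c" using bq_pos[OF ci False]
            by (simp add: \<alpha>_def \<open>br h x = c *\<^sub>R x\<close> bilinear_lmul[OF Qb])
          ultimately show "br h x = \<alpha> h *\<^sub>R x" by simp
        qed
        then show ?thesis using xU lin by (intro span_base) blast
      qed
    qed
  next
    case False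
    then obtain h where hA: "h \<in> A" and ns: "\<not> (\<exists>c. \<forall>x\<in>U. br h x = c *\<^sub>R x)" by blast
    have ed: "U \<subseteq> span (\<Union>l. {x\<in>U. br h x = l *\<^sub>R x})"
      by (rule eig_decomp[OF Qb bq_sym[OF la ci] bq_pos[OF ci] br_lin1[OF la] U])
         (use AU hA ad_sym[OF la ci Ap[OF hA]] in auto)
    have sub: "{x\<in>U. br h x = l *\<^sub>R x} \<subseteq> span (\<Union>{U \<inter> root_space br A \<alpha> | \<alpha>. linear \<alpha>})" for l
    proof -
      define Ul where "Ul = {x\<in>U. br h x = l *\<^sub>R x}"
      have UlU: "Ul \<subseteq> U" by (auto simp: Ul_def)
      have sUl: "subspace Ul" using U unfolding subspace_def Ul_def
        by (auto simp: bilinear_radd[OF b] bilinear_rmul[OF b] bilinear_rzero[OF b] algebra_simps)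
      have AUl: "br h' x \<in> Ul" if "h' \<in> A" "x \<in> Ul" for h' x
      proof -
        have "br h (br h' x) = br h' (br h x)" by (rule ad_comm[OF la Aab[OF hA that(1)]])
        also have "\<dots> = l *\<^sub>R br h' x" using that by (simp add: Ul_def bilinear_rmul[OF b])
        finally show ?thesis using that AU by (auto simp: Ul_def)
      qed
      have "Ul \<noteq> U" using ns by (auto simp: Ul_def)
      then have "span Ul \<subset> span U" using UlU span_eq_iff[of Ul] span_eq_iff[of U] sUl U by blast
      then have "dim Ul < dim U" by (rule dim_psubset)
      then have "Ul \<subseteq> span (\<Union>{Ul \<inter> root_space br A \<alpha> | \<alpha>. linear \<alpha>})"
        using less.hyps[OF _ sUl AUl] by blast
      also have "\<dots> \<subseteq> span (\<Union>{U \<inter> root_space br A \<alpha> | \<alpha>. linear \<alpha>})"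
        by (rule span_mono) (use UlU in blast)
      finally show ?thesis by (simp add: Ul_def)
    qed
    have "span (\<Union>l. {x\<in>U. br h x = l *\<^sub>R x}) \<subseteq> span (\<Union>{U \<inter> root_space br A \<alpha> | \<alpha>. linear \<alpha>})"
      by (rule span_minimal) (use sub in \<open>auto simp: subspace_span\<close>)
    then show ?thesis using ed by blast
  qed
qed

fun qop :: "('v::real_vector \<Rightarrow> 'v) \<Rightarrow> (nat \<Rightarrow> real) \<Rightarrow> nat \<Rightarrow> 'v \<Rightarrow> 'v" where
  "qop h lam 0 = (\<lambda>v. v)"
| "qop h lam (Suc n) = (\<lambda>v. h (qop h lam n v) - lam n *\<^sub>R qop h lam n v)"

lemma qop_linear: "linear h \<Longrightarrow> linear (qop h lam n)"
proof (induction n)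
  case 0 then show ?case by (simp add: linear_id[unfolded id_def])
next
  case (Suc n)
  then show ?case
    by (auto intro!: linearI simp: linear_add[OF Suc.IH] linear_scale[OF Suc.IH] linear_add[OF Suc.prems] linear_scale[OF Suc.prems] algebra_simps)
qed

lemma qop_eig:
  assumes h: "linear h" and ev: "\<And>k. h (x k) = lam k *\<^sub>R x k"
  shows "qop h lam n (x k) = (if k < n then 0 else (\<Prod>j<n. (lam k - lam j)) *\<^sub>R x k)"
proof (induction n)
  case 0 then show ?case by simp
next
  case (Suc n)
  show ?case
  proof (cases "k < n")
    case True then show ?thesis using Suc.IH by (simp add: linear_0[OF h])
  next
    case False
    then have "qop h lam (Suc n) (x k) = (\<Prod>j<n. (lam k - lam j)) *\<^sub>R (lam k *\<^sub>R x k) - lam n *\<^sub>R ((\<Prod>j<n. (lam k - lam j)) *\<^sub>R x k)"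
      using Suc.IH by (simp add: linear_scale[OF h] ev)
    also have "\<dots> = (\<Prod>j<Suc n. (lam k - lam j)) *\<^sub>R x k"
      by (simp add: algebra_simps)
    finally show ?thesis using False by (cases "k = n") auto
  qed
qed

lemma ind_l:
  fixes x :: "nat \<Rightarrow> 'v::euclidean_space"
  assumes notin: "\<And>n. x n \<notin> span (x ` {..<n})"
  shows "independent (x ` {..<n}) \<and> card (x ` {..<n}) = n"
proof (induction n)
  case 0
  have "x ` {..<0} = {}" by simp
  then show ?case using independent_empty by (metis card.empty)
next
  case (Suc n)
  have xn: "x n \<notin> x ` {..<n}" using notin[of n] span_base[of "x n" "x ` {..<n}"] by blast
  have e: "x ` {..<Suc n} = insert (x n) (x ` {..<n})" by (simp add: lessThan_Suc)
  have i1: "independent (insert (x n) (x ` {..<n}))"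
    using Suc.IH notin[of n] xn independent_insert[of "x n" "x ` {..<n}"] by simp
  have "card (insert (x n) (x ` {..<n})) = Suc n"
    using card_insert_disjoint[OF finite_imageI[OF finite_lessThan] xn] Suc.IH by simp
  then show ?case unfolding e using i1 by blast
qed

lemma fin_l:
  fixes x :: "nat \<Rightarrow> 'v::euclidean_space"
  assumes "\<And>n. independent (x ` {..<n}) \<and> card (x ` {..<n}) = n"
  shows False
proof -
  have "independent (x ` {..<Suc DIM('v)})" using assms by blast
  then have "card (x ` {..<Suc DIM('v)}) \<le> DIM('v)" using independent_bound[of "x ` {..<Suc DIM('v)}"] by blast
  then show False using assms[of "Suc DIM('v)"] by simp
qed
lemma eig_infinite:
  fixes h :: "'v::euclidean_space \<Rightarrow> 'v" and x :: "nat \<Rightarrow> 'v"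
  assumes h: "linear h" and nz: "\<And>k. x k \<noteq> 0" and ev: "\<And>k. h (x k) = lam k *\<^sub>R x k" and inj: "inj lam"
  shows False
proof -
  have notin: "x n \<notin> span (x ` {..<n})" for n
  proof
    assume a: "x n \<in> span (x ` {..<n})"
    have "qop h lam n (x n) = 0"
    proof (rule linear_eq_0_on_span[OF qop_linear[OF h] _ a])
      fix y assume "y \<in> x ` {..<n}"
      then obtain k where "k < n" "y = x k" by auto
      then show "qop h lam n y = 0" using qop_eig[where h=h and x=x and lam=lam and n=n and k=k, OF h ev] by simp
    qed
    moreover have "(\<Prod>j<n. (lam n - lam j)) \<noteq> 0"
    proof -
      have "lam n - lam j \<noteq> 0" if "j < n" for j using inj that by (auto dest: injD)
      then show ?thesis by simp
    qed
    moreover have "qop h lam n (x n) = (\<Prod>j<n. (lam n - lam j)) *\<^sub>R x n"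
      using qop_eig[where h=h and x=x and lam=lam and n=n and k=n, OF h ev] by simp
    ultimately show False using nz[of n] by simp
  qed
  show False using fin_l[OF ind_l[OF notin]] .
qed

lemma sl2_kill:
  fixes e f h :: "'v::euclidean_space \<Rightarrow> 'v"
  assumes el: "linear e" and fl: "linear f" and hl: "linear h" and c: "c \<noteq> 0"
    and r1: "\<And>v. e (f v) = f (e v) - h v"
    and r2: "\<And>v. h (f v) = f (h v) - c *\<^sub>R f v"
    and ew: "e w = 0" and hw: "h w = 0"
  shows "f w = 0"
proof (rule ccontr)
  assume unz: "f w \<noteq> 0"
  define u where "u = f w"
  have eu: "e u = 0" by (simp add: u_def r1 ew hw linear_0[OF fl])
  have hu: "h u = (- c) *\<^sub>R u" by (simp add: u_def r2 hw linear_0[OF fl])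
  have hk: "h ((f ^^ k) u) = (- c * (real k + 1)) *\<^sub>R (f ^^ k) u" for k
  proof (induction k)
    case 0 then show ?case using hu by simp
  next
    case (Suc k)
    have "h ((f ^^ Suc k) u) = f (h ((f ^^ k) u)) - c *\<^sub>R f ((f ^^ k) u)" by (simp add: r2)
    also have "\<dots> = (- c * (real k + 1)) *\<^sub>R f ((f ^^ k) u) - c *\<^sub>R f ((f ^^ k) u)"
      by (simp only: Suc.IH linear_scale[OF fl])
    also have "\<dots> = (- c * (real k + 1) - c) *\<^sub>R f ((f ^^ k) u)"
      by (simp only: scaleR_diff_left)
    also have "- c * (real k + 1) - c = - c * (real (Suc k) + 1)" by (simp add: algebra_simps)
    also have "f ((f ^^ k) u) = (f ^^ Suc k) u" by simp
    finally show ?case .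
  qed
  have ek: "e ((f ^^ Suc k) u) = (c * (real k + 1) * (real k + 2) / 2) *\<^sub>R (f ^^ k) u" for k
  proof (induction k)
    case 0 then show ?case using eu hu by (simp add: r1 linear_0[OF fl])
  next
    case (Suc k)
    have "e ((f ^^ Suc (Suc k)) u) = f (e ((f ^^ Suc k) u)) - h ((f ^^ Suc k) u)"
      by (simp add: r1)
    also have "\<dots> = f ((c * (real k + 1) * (real k + 2) / 2) *\<^sub>R (f ^^ k) u) - (- c * (real (Suc k) + 1)) *\<^sub>R (f ^^ Suc k) u"
      by (simp only: Suc.IH hk)
    also have "\<dots> = (c * (real k + 1) * (real k + 2) / 2) *\<^sub>R (f ^^ Suc k) u - (- c * (real (Suc k) + 1)) *\<^sub>R (f ^^ Suc k) u"
      by (simp add: linear_scale[OF fl])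
    also have "\<dots> = (c * (real k + 1) * (real k + 2) / 2 - (- c * (real (Suc k) + 1))) *\<^sub>R (f ^^ Suc k) u"
      by (simp only: scaleR_diff_left)
    also have "c * (real k + 1) * (real k + 2) / 2 - (- c * (real (Suc k) + 1)) = c * (real k + 1) * (real k + 2) / 2 + c * (real k + 2)"
      by simp
    also have "c * (real k + 1) * (real k + 2) / 2 + c * (real k + 2) = c * (real (Suc k) + 1) * (real (Suc k) + 2) / 2"
      by (simp add: field_simps)
    finally show ?case .
  qed
  have nzk: "(f ^^ k) u \<noteq> 0" for k
  proof (induction k)
    case 0 then show ?case using unz by (simp add: u_def)
  next
    case (Suc k)
    show ?case
    proof
      assume "(f ^^ Suc k) u = 0"
      then have "e ((f ^^ Suc k) u) = e 0" by simp
      moreover have "e 0 = 0" by (rule linear_0[OF el])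
      ultimately have "(c * (real k + 1) * (real k + 2) / 2) *\<^sub>R (f ^^ k) u = 0" using ek by simp
      moreover have "c * (real k + 1) * (real k + 2) / 2 \<noteq> 0" using c by simp
      ultimately show False using Suc.IH by simp
    qed
  qed
  have inj: "inj (\<lambda>k. - c * (real k + 1))" using c by (auto intro!: injI)
  show False by (rule eig_infinite[OF hl nzk hk inj])
qed

lemma vec_eq_inner: fixes a b :: "'v::real_inner" assumes "\<And>v. v \<bullet> a = v \<bullet> b" shows "a = b"
proof -
  have "(a - b) \<bullet> (a - b) = 0" using assms[of "a - b"] by (simp add: inner_diff_right)
  then show ?thesis by simp
qed

lemma orth_in:
  fixes W :: "'v::euclidean_space set"
  assumes W: "subspace W" and h: "\<And>w. (\<And>u. u \<in> W \<Longrightarrow> w \<bullet> u = 0) \<Longrightarrow> w \<bullet> z = 0"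
  shows "z \<in> W"
proof (rule ccontr)
  assume zW: "z \<notin> W"
  have sW: "span W = W" using W by (simp add: span_eq_iff)
  have ps: "span W \<subset> span (insert z W)"
  proof -
    have "span W \<subseteq> span (insert z W)" by (rule span_mono) blast
    moreover have "z \<in> span (insert z W)" by (rule span_base) simp
    ultimately show ?thesis using zW sW by blast
  qed
  then obtain y where y: "y \<noteq> 0" "y \<in> span (insert z W)" "\<And>u. u \<in> span W \<Longrightarrow> orthogonal y u"
    using orthogonal_to_subspace_exists_gen[OF ps] by metis
  have yW: "y \<bullet> u = 0" if "u \<in> W" for u using y(3)[of u] that sW by (simp add: orthogonal_def)
  have yz: "y \<bullet> z = 0" by (rule h) (rule yW)
  have lin: "linear (\<lambda>u. y \<bullet> u)" by (simp add: bounded_linear.linear bounded_linear_inner_right)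
  have "y \<bullet> y = 0"
    by (rule linear_eq_0_on_span[OF lin _ y(2)]) (use yz yW in auto)
  then show False using y(1) by simp
qed

lemma bil_zero: "bilinear (\<lambda>(x::'a::real_vector) (y::'b::real_vector). (0::'c::real_vector))"
  by (simp add: bilinear_def linear_zero)

locale lsetting =
  fixes br :: "'g::euclidean_space \<Rightarrow> 'g \<Rightarrow> 'g" and \<Theta> :: "'g \<Rightarrow> 'g" and A :: "'g set"
    and h0 :: 'g and \<pi> :: "'g \<Rightarrow> 'v::euclidean_space \<Rightarrow> 'v"
  assumes la: "lie_algebra br" and ci: "cartan_involution br \<Theta>" and MA: "max_abelian_in_p br \<Theta> A"
    and reg: "regular_element br A h0" and rep: "lie_rep br \<pi>"
begin

definition "bset = A + m_part br \<Theta> A + s_plus br A h0"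
definition "WW = span {\<pi> x v | x v. x \<in> bset}"

lemma b: "bilinear br" by (rule la_bil[OF la])
lemma sA: "subspace A" using MA by (simp add: max_abelian_in_p_def abelian_subspace_def)
lemma Aab: "h \<in> A \<Longrightarrow> h' \<in> A \<Longrightarrow> br h h' = 0" using MA by (simp add: max_abelian_in_p_def abelian_subspace_def)
lemma Ap: "h \<in> A \<Longrightarrow> \<Theta> h = - h" using MA by (auto simp: max_abelian_in_p_def)
lemma tl: "linear \<Theta>" by (rule th_lin[OF ci])

lemma A_in: assumes y: "\<Theta> y = - y" and yc: "\<And>h. h \<in> A \<Longrightarrow> br h y = 0" shows "y \<in> A"
proof -
  define B' where "B' = span (insert y A)"
  have ab: "abelian_subspace br B'" unfolding abelian_subspace_def
  proof (intro conjI ballI)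
    show "subspace B'" by (simp add: B'_def subspace_span)
  next
    fix x z assume "x \<in> B'" "z \<in> B'"
    show "br x z = 0"
    proof (rule bilinear_eq[OF b bil_zero, of B' "insert y A" B' "insert y A" x z])
      show "B' \<subseteq> span (insert y A)" "B' \<subseteq> span (insert y A)" by (simp_all add: B'_def)
      show "x \<in> B'" "z \<in> B'" by fact+
    next
      fix x z assume "x \<in> insert y A" "z \<in> insert y A"
      then show "br x z = 0"
        using Aab yc la_anti[OF la, of y] la
        by (auto simp: lie_algebra_def)
    qed
  qed
  have p: "subspace {x. \<Theta> x = - x}"
    by (auto simp: subspace_def linear_0[OF tl] linear_add[OF tl] linear_scale[OF tl])
  have "B' \<subseteq> {x. \<Theta> x = - x}" unfolding B'_def
    by (rule span_minimal[OF _ p]) (use y Ap in auto)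
  moreover have "A \<subseteq> B'" unfolding B'_def by (meson span_superset subset_insertI subset_trans)
  ultimately have "B' = A" using MA ab by (auto simp: max_abelian_in_p_def)
  moreover have "y \<in> B'" unfolding B'_def by (rule span_base) simp
  ultimately show ?thesis by simp
qed

lemma A0: "0 \<in> A" using sA by (rule subspace_0)
lemma m0: "0 \<in> m_part br \<Theta> A" by (simp add: m_part_def linear_0[OF tl] bilinear_rzero[OF b])
lemma sp0: "0 \<in> s_plus br A h0" by (simp add: s_plus_def span_zero)

lemma in_b: "a \<in> A \<Longrightarrow> m \<in> m_part br \<Theta> A \<Longrightarrow> s \<in> s_plus br A h0 \<Longrightarrow> a + m + s \<in> bset"
  unfolding bset_def by (intro set_plus_intro)

lemma piW: "x \<in> bset \<Longrightarrow> \<pi> x v \<in> WW"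
  unfolding WW_def by (rule span_base) blast

lemma pil: "linear (\<pi> x)" using rep by (simp add: lie_rep_def)
lemma pilx: "linear (\<lambda>x. \<pi> x v)" using rep by (simp add: lie_rep_def)
lemma pibr: "\<pi> (br x y) v = \<pi> x (\<pi> y v) - \<pi> y (\<pi> x v)" using rep by (simp add: lie_rep_def)

lemma G_sub: "subspace {x. \<forall>v. \<pi> x v \<in> WW}"
proof -
  have sW: "subspace WW" by (simp add: WW_def subspace_span)
  show ?thesis unfolding subspace_def
    using linear_0[OF pilx] linear_add[OF pilx] linear_scale[OF pilx] subspace_0[OF sW]
      subspace_add[OF sW] subspace_scale[OF sW]
    by (auto simp: subspace_def)
qed

lemma centr: assumes x: "x \<in> root_space br A \<alpha>" and z: "\<forall>h\<in>A. \<alpha> h = 0" shows "x \<in> bset"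
proof -
  have c1: "br h x = 0" if "h \<in> A" for h using x z that by (simp add: root_space_def)
  have c2: "br h (\<Theta> x) = 0" if "h \<in> A" for h
  proof -
    have "br h (\<Theta> x) = \<Theta> (br (\<Theta> h) x)" by (simp add: th_br[OF ci] th_inv[OF ci])
    also have "\<dots> = 0" using Ap[OF that] c1[OF that] bilinear_lneg[OF b] linear_0[OF tl] by simp
    finally show ?thesis .
  qed
  define xk where "xk = (1/2) *\<^sub>R (x + \<Theta> x)"
  define xp where "xp = (1/2) *\<^sub>R (x - \<Theta> x)"
  have "xk \<in> m_part br \<Theta> A"
    using c1 c2 by (simp add: m_part_def xk_def linear_scale[OF tl] linear_add[OF tl] th_inv[OF ci]
        bilinear_rmul[OF b] bilinear_radd[OF b] add.commute)
  moreover have "xp \<in> A"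
  proof (rule A_in)
    show "\<Theta> xp = - xp" by (simp add: xp_def linear_scale[OF tl] linear_diff[OF tl] th_inv[OF ci]) (simp add: algebra_simps)
    show "br h xp = 0" if "h \<in> A" for h
      using c1[OF that] c2[OF that] by (simp add: xp_def bilinear_rmul[OF b] bilinear_rsub[OF b])
  qed
  moreover have "x = xp + xk + 0" by (simp add: xp_def xk_def algebra_simps) (simp add: scaleR_2[symmetric])
  ultimately show ?thesis using in_b sp0 by metis
qed

lemma pos: assumes "restricted_root br A \<alpha>" "\<alpha> h0 > 0" "x \<in> root_space br A \<alpha>" shows "x \<in> bset"
proof -
  have "x \<in> s_plus br A h0" unfolding s_plus_def by (rule span_base) (use assms in blast)
  then have "0 + 0 + x \<in> bset" using in_b A0 m0 by blast
  then show ?thesis by simp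
qed

end

context lsetting begin

definition "PP X = adjoint (\<pi> X)"

lemma Pw: "v \<bullet> PP X u = \<pi> X v \<bullet> u" unfolding PP_def by (rule adjoint_works[OF pil])
lemma Pl: "linear (PP X)" unfolding PP_def by (rule adjoint_linear[OF pil])

lemma Pbr: "PP (br X Y) u = PP Y (PP X u) - PP X (PP Y u)"
  by (rule vec_eq_inner) (simp add: Pw pibr inner_diff_left inner_diff_right)

lemma Psc: "PP (c *\<^sub>R X) u = c *\<^sub>R PP X u"
  by (rule vec_eq_inner) (simp add: Pw linear_scale[OF pilx])

lemma Pkill: assumes "X \<in> bset" "\<And>u. u \<in> WW \<Longrightarrow> w \<bullet> u = 0" shows "PP X w = 0"
proof (rule vec_eq_inner)
  fix v
  have "\<pi> X v \<in> WW" using piW[OF assms(1)] .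
  then have "w \<bullet> \<pi> X v = 0" using assms(2) by blast
  then show "v \<bullet> PP X w = v \<bullet> 0" by (simp add: Pw inner_commute)
qed

lemma neg: assumes rr: "restricted_root br A \<alpha>" and a0: "\<alpha> h0 < 0" and F: "F \<in> root_space br A \<alpha>"
  shows "\<pi> F v \<in> WW"
proof (cases "F = 0")
  case True
  then show ?thesis using linear_0[OF pilx] subspace_0[OF subspace_span] by (simp add: WW_def)
next
  case Fnz: False
  obtain h1 where h1: "h1 \<in> A" "\<alpha> h1 \<noteq> 0" and al: "linear \<alpha>" using rr by (auto simp: restricted_root_def)
  define E where "E = \<Theta> F"
  define H where "H = br E F"
  define K where "K = killing br"
  have kb: "bilinear K" unfolding K_def by (rule killing_bil[OF la])
  have rF: "br h F = \<alpha> h *\<^sub>R F" if "h \<in> A" for h using F that by (simp add: root_space_def)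
  have rE: "br h E = (- \<alpha> h) *\<^sub>R E" if "h \<in> A" for h
  proof -
    have "br h E = \<Theta> (br (\<Theta> h) F)" by (simp add: E_def th_br[OF ci] th_inv[OF ci])
    also have "\<dots> = (- \<alpha> h) *\<^sub>R E"
      using Ap[OF that] rF[OF that] by (simp add: bilinear_lneg[OF b] linear_neg[OF tl] linear_scale[OF tl] E_def)
    finally show ?thesis .
  qed
  have Enz: "E \<noteq> 0"
  proof
    assume "E = 0"
    then have "\<Theta> (\<Theta> F) = \<Theta> 0" by (simp add: E_def)
    then show False using Fnz by (simp add: th_inv[OF ci] linear_0[OF tl])
  qed
  have Eb: "E \<in> bset"
  proof (rule pos)
    show "restricted_root br A (\<lambda>y. - \<alpha> y)" unfolding restricted_root_def
    proof (intro conjI)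
      show "linear (\<lambda>y. - \<alpha> y)" by (rule linearI) (simp_all add: linear_add[OF al] linear_scale[OF al])
      show "\<exists>h\<in>A. - \<alpha> h \<noteq> 0" using h1 by auto
      have "E \<in> root_space br A (\<lambda>y. - \<alpha> y)" using rE by (simp add: root_space_def)
      then show "root_space br A (\<lambda>y. - \<alpha> y) \<noteq> {0}" using Enz by blast
    qed
    show "- \<alpha> h0 > 0" using a0 by simp
    show "E \<in> root_space br A (\<lambda>y. - \<alpha> y)" using rE by (simp add: root_space_def)
  qed
  have Hc: "br h H = 0" if "h \<in> A" for h
  proof -
    have "br h H = br (br h E) F + br E (br h F)" unfolding H_def by (rule la_leib[OF la])
    also have "\<dots> = 0" using rE[OF that] rF[OF that] by (simp add: bilinear_lmul[OF b] bilinear_rmul[OF b] bilinear_lneg[OF b] H_def)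
    finally show ?thesis .
  qed
  have HT: "\<Theta> H = - H"
    using la_anti[OF la, of F E] by (simp add: H_def th_br[OF ci] E_def th_inv[OF ci])
  have HA: "H \<in> A" by (rule A_in[OF HT Hc])
  have Hb: "H \<in> bset" using in_b[OF HA m0 sp0] by simp
  have qF: "bq br \<Theta> F F > 0" by (rule bq_pos[OF ci Fnz])
  have KH: "K h H = \<alpha> h * bq br \<Theta> F F" if "h \<in> A" for h
  proof -
    have "K h H = K (br h E) F" unfolding K_def H_def by (rule killing_inv[OF la, symmetric])
    also have "\<dots> = - \<alpha> h * K E F" using rE[OF that] by (simp add: bilinear_lmul[OF kb] bilinear_lneg[OF kb])
    also have "K E F = - bq br \<Theta> F F" by (simp add: K_def E_def bq_def killing_sym[OF la])
    finally show ?thesis by simp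
  qed
  have Hnz: "H \<noteq> 0"
  proof
    assume "H = 0"
    then have "K h1 H = 0" by (simp add: bilinear_rzero[OF kb])
    then show False using KH[OF h1(1)] h1(2) qF by simp
  qed
  have "bq br \<Theta> H H = K H H" using HT by (simp add: bq_def K_def bilinear_rneg[OF killing_bil[OF la]])
  then have "\<alpha> H * bq br \<Theta> F F > 0" using KH[OF HA] bq_pos[OF ci Hnz] by simp
  then have cnz: "\<alpha> H \<noteq> 0" by auto
  have orth: "w \<bullet> \<pi> F v = 0" if wW: "\<And>u. u \<in> WW \<Longrightarrow> w \<bullet> u = 0" for w
  proof -
    have "PP F w = 0"
    proof (rule sl2_kill[OF Pl Pl Pl cnz])
      fix u
      show "PP E (PP F u) = PP F (PP E u) - PP H u" by (simp add: H_def Pbr)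
      have "PP (br H F) u = PP F (PP H u) - PP H (PP F u)" by (rule Pbr)
      moreover have "br H F = \<alpha> H *\<^sub>R F" by (rule rF[OF HA])
      ultimately show "PP H (PP F u) = PP F (PP H u) - \<alpha> H *\<^sub>R PP F u" by (simp add: Psc)
    next
      show "PP E w = 0" by (rule Pkill[OF Eb wW])
      show "PP H w = 0" by (rule Pkill[OF Hb wW])
    qed
    then have "v \<bullet> PP F w = 0" by simp
    then show ?thesis by (simp add: Pw inner_commute)
  qed
  show ?thesis by (rule orth_in[OF _ orth]) (simp add: WW_def subspace_span)
qed

lemma key: "\<pi> x v \<in> WW"
proof -
  have all: "(UNIV :: 'g set) \<subseteq> span (\<Union>{UNIV \<inter> root_space br A \<alpha> | \<alpha>. linear \<alpha>})"
    by (rule joint_decomp[OF la ci Ap Aab subspace_UNIV]) auto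
  have "span (\<Union>{UNIV \<inter> root_space br A \<alpha> | \<alpha>. linear \<alpha>}) \<subseteq> {x. \<forall>v. \<pi> x v \<in> WW}"
  proof (rule span_minimal[OF _ G_sub], safe)
    fix x v \<alpha> assume xr: "x \<in> root_space br A \<alpha>" and al: "linear \<alpha>"
    show "\<pi> x v \<in> WW"
    proof (cases "x = 0")
      case True
      then show ?thesis using linear_0[OF pilx] subspace_0[OF subspace_span] by (simp add: WW_def)
    next
      case xnz: False
      show ?thesis
      proof (cases "\<forall>h\<in>A. \<alpha> h = 0")
        case True
        then show ?thesis using centr[OF xr] piW by blast
      next
        case False
        have rr: "restricted_root br A \<alpha>" unfolding restricted_root_def using al False xr xnz by blast
        then have "\<alpha> h0 \<noteq> 0" using reg by (simp add: regular_element_def)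
        then consider "\<alpha> h0 > 0" | "\<alpha> h0 < 0" by linarith
        then show ?thesis
        proof cases
          case 1 then show ?thesis using pos[OF rr 1 xr] piW by blast
        next
          case 2 then show ?thesis by (rule neg[OF rr _ xr])
        qed
      qed
    qed
  qed
  with all show ?thesis by blast
qed

end

theorem lemma2p7:
  fixes br :: "'g::euclidean_space \<Rightarrow> 'g \<Rightarrow> 'g"
    and \<Theta> :: "'g \<Rightarrow> 'g"
    and A :: "'g set"
    and h0 :: 'g
    and \<pi> :: "'g \<Rightarrow> 'v::euclidean_space \<Rightarrow> 'v"
  assumes "semisimple br"
    and "\<forall>I. \<not> compact_ideal br I"
    and "cartan_involution br \<Theta>"
    and "max_abelian_in_p br \<Theta> A"
    and "regular_element br A h0"
    and "lie_rep br \<pi>"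
  shows "span {\<pi> x v | x v. True} =
         span {\<pi> x v | x v. x \<in> A + m_part br \<Theta> A + s_plus br A h0}"
proof -
  interpret lsetting br \<Theta> A h0 \<pi>
    using assms by unfold_locales (auto simp: semisimple_def)
  show ?thesis
  proof
    show "span {\<pi> x v | x v. True} \<subseteq> span {\<pi> x v | x v. x \<in> A + m_part br \<Theta> A + s_plus br A h0}"
      by (rule span_minimal) (use key in \<open>auto simp: WW_def bset_def subspace_span\<close>)
    show "span {\<pi> x v | x v. x \<in> A + m_part br \<Theta> A + s_plus br A h0} \<subseteq> span {\<pi> x v | x v. True}"
      by (rule span_mono) blast
  qed
qed

end
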